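(* If $I$ is a finite set of positive integers and $i\in I$, then $d(I;i)=0$, where $d(I;z)$ is the descent polynomial evaluated at $z=i$.
   Context: For a finite set $I$ of positive integers with $m=\max(I\cup\{0\})$ and $n>m$, $d(I;n)$ is the number of permutations $\pi\in\mathfrak S_n$ with $\{j\mid\pi_j>\pi_{j+1}\}=I$; this is a polynomial in $n$, and $d(I;z)$ denotes the polynomial evaluated at an arbitrary complex number $z$. *)

theory Defs
  imports Complex_Main "HOL-Combinatorics.Permutations" "HOL-Computational_Algebra.Polynomial"
begin

definition descent_set :: "nat \<Rightarrow> (nat \<Rightarrow> nat) \<Rightarrow> nat set" where
  "descent_set n \<pi> = {j. 1 \<le> j \<and> j < n \<and> \<pi> j > \<pi> (Suc j)}"

definition descent_count :: "nat set \<Rightarrow> nat \<Rightarrow> nat" where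
  "descent_count I n = card {\<pi>. \<pi> permutes {1..n} \<and> descent_set n \<pi> = I}"

definition descent_poly :: "nat set \<Rightarrow> complex poly" where
  "descent_poly I = (THE p. \<forall>n::nat. n > Max (I \<union> {0}) \<longrightarrow>
       poly p (of_nat n) = of_nat (descent_count I n))"

end

theory Submission
  imports Defs
begin


definition ldesc :: "nat list \<Rightarrow> nat set" where
  "ldesc xs = {j. 1 \<le> j \<and> j < length xs \<and> xs!(j-1) > xs!j}"

definition LA :: "nat set \<Rightarrow> nat set \<Rightarrow> nat list set" where
  "LA A J = {ys. distinct ys \<and> set ys = A \<and> ldesc ys = J}"

lemma ldesc_map:
  assumes "set xs \<subseteq> A" "\<forall>x\<in>A. \<forall>y\<in>A. x < y \<longrightarrow> h x < h y"
  shows "ldesc (map h xs) = ldesc xs"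
proof -
  have "\<And>a b. a \<in> A \<Longrightarrow> b \<in> A \<Longrightarrow> (h a > h b) = (a > b)"
    using assms(2) by (metis less_asym' linorder_neqE_nat)
  moreover have "\<And>j. j < length xs \<Longrightarrow> xs!j \<in> A" using assms(1) by auto
  ultimately show ?thesis unfolding ldesc_def
    by (auto simp: less_imp_diff_less)
qed

lemma LA_iso:
  assumes "bij_betw h A B" "\<forall>x\<in>A. \<forall>y\<in>A. x < y \<longrightarrow> h x < h y"
  shows "card (LA A J) = card (LA B J)"
proof -
  have injh: "inj_on h A" using assms(1) by (simp add: bij_betw_def)
  have inj: "inj_on (map h) (LA A J)"
  proof (rule inj_onI)
    fix xs ys assume a: "xs \<in> LA A J" "ys \<in> LA A J" "map h xs = map h ys"
    hence "set xs \<union> set ys = A" unfolding LA_def by simp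
    hence "inj_on h (set xs \<union> set ys)" using injh by simp
    thus "xs = ys" using a(3) inj_on_map_eq_map by blast
  qed
  have img: "map h ` LA A J = LA B J"
  proof
    show "map h ` LA A J \<subseteq> LA B J"
    proof
      fix ys assume "ys \<in> map h ` LA A J"
      then obtain xs where xs: "xs \<in> LA A J" "ys = map h xs" by auto
      thus "ys \<in> LA B J" using assms ldesc_map[of xs A h]
        unfolding LA_def bij_betw_def
        by (auto simp: distinct_map inj_on_subset)
    qed
  next
    show "LA B J \<subseteq> map h ` LA A J"
    proof
      fix ys assume ys: "ys \<in> LA B J"
      define xs where "xs = map (inv_into A h) ys"
      have bi: "bij_betw (inv_into A h) B A" using assms(1) by (simp add: bij_betw_inv_into)
      have hy: "\<And>y. y \<in> set ys \<Longrightarrow> (h \<circ> inv_into A h) y = y"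
        using ys assms(1) unfolding LA_def bij_betw_def by (simp add: f_inv_into_f)
      have e: "map h xs = ys" unfolding xs_def map_map by (rule map_idI) (rule hy)
      have sx: "set xs = A" unfolding xs_def using ys bi unfolding LA_def bij_betw_def by auto
      have dx: "distinct xs" unfolding xs_def using ys bi unfolding LA_def bij_betw_def
        by (auto simp: distinct_map)
      have "ldesc xs = J" using ldesc_map[of xs A h] assms e ys sx unfolding LA_def by auto
      hence "xs \<in> LA A J" using sx dx unfolding LA_def by auto
      thus "ys \<in> map h ` LA A J" using e by force
    qed
  qed
  show ?thesis using card_image[OF inj] img by simp
qed

lemma LA_card_iso:
  assumes "finite A" "card A = k"
  shows "card (LA A J) = card (LA {1..k} J)"
proof -
  define s where "s = sorted_list_of_set A"
  define h where "h = (\<lambda>i. s ! (i - 1))"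
  have ls: "length s = k" using assms s_def by simp
  have ss: "sorted_wrt (<) s" unfolding s_def by simp
  have ds: "distinct s" unfolding s_def by simp
  have sa: "set s = A" unfolding s_def using assms by simp
  have mono: "\<forall>x\<in>{1..k}. \<forall>y\<in>{1..k}. x < y \<longrightarrow> h x < h y"
    unfolding h_def using ss ls by (auto simp: sorted_wrt_iff_nth_less)
  have "h ` {1..k} = A"
  proof
    show "h ` {1..k} \<subseteq> A" unfolding h_def using ls sa by auto
    show "A \<subseteq> h ` {1..k}"
    proof
      fix x assume "x \<in> A"
      then obtain i where "i < k" "s ! i = x" using sa ls by (metis in_set_conv_nth)
      thus "x \<in> h ` {1..k}" unfolding h_def by (intro image_eqI[of _ _ "Suc i"]) auto
    qed
  qed
  moreover have "inj_on h {1..k}" using mono unfolding inj_on_def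
    by (metis linorder_neqE_nat order_less_irrefl)
  ultimately have "bij_betw h {1..k} A" by (simp add: bij_betw_def)
  from LA_iso[OF this mono] show ?thesis by simp
qed




lemma ldesc_append_lt: "j < length ys \<Longrightarrow> (j \<in> ldesc (ys@zs)) = (j \<in> ldesc ys)"
  unfolding ldesc_def by (auto simp: nth_append)

lemma ldesc_append_gt: "length ys < j \<Longrightarrow> (j \<in> ldesc (ys@zs)) = (j - length ys \<in> ldesc zs)"
  unfolding ldesc_def by (auto simp: nth_append)

lemma ldesc_sub: "ldesc xs \<subseteq> {1..<length xs}"
  unfolding ldesc_def by auto

lemma nodesc_sorted: assumes "distinct zs" "ldesc zs = {}" shows "sorted_wrt (<) zs"
proof -
  have "\<forall>i. Suc i < length zs \<longrightarrow> zs!i < zs!(Suc i)"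
  proof (intro allI impI)
    fix i assume i: "Suc i < length zs"
    hence "Suc i \<notin> ldesc zs" using assms by auto
    hence "\<not> zs!i > zs!(Suc i)" using i unfolding ldesc_def by auto
    moreover have "zs!i \<noteq> zs!(Suc i)" using assms(1) i by (simp add: nth_eq_iff_index_eq)
    ultimately show "zs!i < zs!(Suc i)" by simp
  qed
  thus ?thesis by (simp add: sorted_wrt_iff_nth_Suc_transp)
qed

lemma sorted_nodesc: assumes "sorted_wrt (<) zs" shows "ldesc zs = {}"
proof -
  have *: "zs!(j-1) < zs!j" if "1 \<le> j" "j < length zs" for j
    using assms sorted_wrt_nth_less[of "(<)" zs "j-1" j] that by simp
  have "\<forall>j. \<not> (1 \<le> j \<and> j < length zs \<and> zs!(j-1) > zs!j)"
    using * by (meson order.asym)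
  thus ?thesis by (simp add: ldesc_def)
qed

lemma finite_LA: "finite A \<Longrightarrow> finite (LA A J)"
proof -
  assume "finite A"
  have "LA A J \<subseteq> {xs. set xs \<subseteq> A \<and> length xs = card A}"
    unfolding LA_def by (auto simp: distinct_card)
  thus ?thesis using finite_lists_length_eq[OF \<open>finite A\<close>] finite_subset by blast
qed

lemma sorted_set_eq: "sorted_wrt (<) zs \<Longrightarrow> sorted_list_of_set (set zs) = zs"
  by (simp add: sorted_list_of_set_sort_remdups strict_sorted_iff distinct_remdups_id sorted_sort_id)

lemma decomp:
  assumes "m \<le> n" "J \<subseteq> {1..<m}"
  shows "card {xs. distinct xs \<and> set xs = {1..n} \<and> ldesc xs - {m} = J}
         = (n choose m) * card (LA {1..m} J)"
proof -
  define S where "S = {A. A \<subseteq> {1..n} \<and> card A = m}"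
  define U where "U = (\<Union>A\<in>S. LA A J)"
  define g where "g = (\<lambda>ys. ys @ sorted_list_of_set ({1..n} - set ys))"
  define T where "T = {xs. distinct xs \<and> set xs = {1..n} \<and> ldesc xs - {m} = J}"
  have finS: "finite S" unfolding S_def by auto
  have lenU: "\<And>ys. ys \<in> U \<Longrightarrow> length ys = m"
    unfolding U_def S_def LA_def by (auto simp: distinct_card)
  have inj: "inj_on g U"
  proof (rule inj_onI)
    fix x y assume "x \<in> U" "y \<in> U" "g x = g y"
    hence "take m (g x) = take m (g y)" by simp
    thus "x = y" using lenU[OF \<open>x\<in>U\<close>] lenU[OF \<open>y\<in>U\<close>] unfolding g_def by simp
  qed
  have cardU: "card U = (n choose m) * card (LA {1..m} J)"
  proof -
    have "card U = (\<Sum>A\<in>S. card (LA A J))"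
      unfolding U_def
      apply (rule card_UN_disjoint[OF finS])
      subgoal unfolding S_def by (auto intro: finite_LA finite_subset)
      subgoal unfolding LA_def by auto
      done
    also have "\<dots> = (\<Sum>A\<in>S. card (LA {1..m} J))"
      apply (rule sum.cong[OF refl])
      unfolding S_def by (metis (mono_tags) LA_card_iso finite_atLeastAtMost finite_subset mem_Collect_eq)
    also have "\<dots> = card S * card (LA {1..m} J)" by simp
    also have "card S = n choose m" unfolding S_def using n_subsets[of "{1..n}" m] by simp
    finally show ?thesis .
  qed
  have "T = g ` U"
  proof
    show "g ` U \<subseteq> T"
    proof
      fix xs assume "xs \<in> g ` U"
      then obtain ys A where A: "A \<subseteq> {1..n}" "card A = m" "ys \<in> LA A J" and xs: "xs = g ys"
        unfolding U_def S_def by auto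
      define zs where "zs = sorted_list_of_set ({1..n} - A)"
      have ys: "distinct ys" "set ys = A" "ldesc ys = J" using A(3) unfolding LA_def by auto
      have ly: "length ys = m" using ys A by (metis distinct_card)
      have xs2: "xs = ys @ zs" unfolding xs zs_def g_def using ys by simp
      have zs: "distinct zs" "set zs = {1..n} - A" "sorted_wrt (<) zs" unfolding zs_def by auto
      have d: "distinct xs" using xs2 ys zs by auto
      have s: "set xs = {1..n}" using xs2 ys zs A by auto
      have "ldesc xs - {m} = J"
      proof (intro set_eqI iffI)
        fix j assume j: "j \<in> ldesc xs - {m}"
        show "j \<in> J"
        proof (cases "j < m")
          case True thus ?thesis using j ldesc_append_lt[of j ys zs] xs2 ly ys by auto
        next
          case False hence "m < j" using j by auto
          thus ?thesis using j ldesc_append_gt[of ys j zs] xs2 ly sorted_nodesc[OF zs(3)] by auto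
        qed
      next
        fix j assume j: "j \<in> J"
        hence "j < m" using assms(2) by auto
        thus "j \<in> ldesc xs - {m}" using j ldesc_append_lt[of j ys zs] xs2 ly ys by auto
      qed
      thus "xs \<in> T" unfolding T_def using d s by auto
    qed
  next
    show "T \<subseteq> g ` U"
    proof
      fix xs assume "xs \<in> T"
      hence x: "distinct xs" "set xs = {1..n}" "ldesc xs - {m} = J" unfolding T_def by auto
      have lx: "length xs = n" using x by (metis card_atLeastAtMost diff_Suc_1 distinct_card)
      define ys where "ys = take m xs"
      define zs where "zs = drop m xs"
      have xs2: "xs = ys @ zs" unfolding ys_def zs_def by simp
      have ly: "length ys = m" unfolding ys_def using lx assms by simp
      have dy: "distinct ys" "distinct zs" using x unfolding ys_def zs_def by auto
      have dis: "set ys \<inter> set zs = {}" unfolding ys_def zs_def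
        using set_take_disj_set_drop_if_distinct x(1) by blast
      have un: "set ys \<union> set zs = {1..n}" using x xs2 by (metis set_append)
      have ldy: "ldesc ys = J"
      proof (intro set_eqI iffI)
        fix j assume j: "j \<in> ldesc ys"
        hence "j < m" using ldesc_sub[of ys] ly by auto
        thus "j \<in> J" using j ldesc_append_lt[of j ys zs] xs2 ly x by auto
      next
        fix j assume j: "j \<in> J"
        hence "j < m" using assms(2) by auto
        thus "j \<in> ldesc ys" using j ldesc_append_lt[of j ys zs] xs2 ly x by auto
      qed
      have "ldesc zs = {}"
      proof (rule ccontr)
        assume "ldesc zs \<noteq> {}"
        then obtain k where k: "k \<in> ldesc zs" by auto
        hence "k \<ge> 1" unfolding ldesc_def by auto
        hence "m + k \<in> ldesc xs" using k ldesc_append_gt[of ys "m+k" zs] xs2 ly by auto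
        moreover have "m + k \<notin> J" using assms(2) \<open>k\<ge>1\<close> by auto
        ultimately show False using x(3) \<open>k\<ge>1\<close> by auto
      qed
      hence "sorted_wrt (<) zs" using nodesc_sorted dy by auto
      hence "zs = sorted_list_of_set (set zs)" using sorted_set_eq by metis
      moreover have "set zs = {1..n} - set ys" using dis un by auto
      ultimately have "xs = g ys" unfolding g_def using xs2 by simp
      moreover have "ys \<in> U" unfolding U_def S_def LA_def
        using dy ldy un ly by (auto simp: distinct_card)
      ultimately show "xs \<in> g ` U" by auto
    qed
  qed
  hence "card T = card U" using card_image[OF inj] by simp
  thus ?thesis using cardU unfolding T_def by simp
qed





lemma nth_perm: "j < n \<Longrightarrow> map \<pi> [1..<Suc n] ! j = \<pi> (Suc j)"
  by (simp del: upt_Suc)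

lemma ldesc_perm: "ldesc (map \<pi> [1..<Suc n]) = descent_set n \<pi>"
proof -
  have a: "map \<pi> [1..<Suc n] ! (j - 1) = \<pi> j" if "1 \<le> j" "j < n" for j
  proof -
    have "j - 1 < n" using that by simp
    hence "map \<pi> [1..<Suc n] ! (j-1) = \<pi> (Suc (j-1))" by (rule nth_perm)
    thus ?thesis using that by simp
  qed
  have b: "map \<pi> [1..<Suc n] ! j = \<pi> (Suc j)" if "j < n" for j by (rule nth_perm[OF that])
  have "ldesc (map \<pi> [1..<Suc n]) = {j. 1 \<le> j \<and> j < n \<and> map \<pi> [1..<Suc n] ! (j-1) > map \<pi> [1..<Suc n] ! j}"
    by (simp add: ldesc_def del: upt_Suc)
  also have "\<dots> = {j. 1 \<le> j \<and> j < n \<and> \<pi> j > \<pi> (Suc j)}"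
    by (intro Collect_cong conj_cong refl) (simp_all add: a b del: upt_Suc)
  finally show ?thesis by (simp add: descent_set_def)
qed

lemma dc_eq: "descent_count I n = card (LA {1..n} I)"
proof -
  define F where "F = (\<lambda>\<pi>::nat\<Rightarrow>nat. map \<pi> [1..<Suc n])"
  define P where "P = {\<pi>. \<pi> permutes {1..n} \<and> descent_set n \<pi> = I}"
  have inj: "inj_on F P"
  proof (rule inj_onI)
    fix \<pi> \<sigma> assume a: "\<pi> \<in> P" "\<sigma> \<in> P" "F \<pi> = F \<sigma>"
    have "\<And>j. j \<in> {1..n} \<Longrightarrow> \<pi> j = \<sigma> j"
    proof -
      fix j assume j: "j \<in> {1..n}"
      have "F \<pi> ! (j - 1) = F \<sigma> ! (j - 1)" using a by simp
      moreover have "j - 1 < n" "Suc (j-1) = j" using j by auto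
      ultimately show "\<pi> j = \<sigma> j" using nth_perm[of "j-1" n \<pi>] nth_perm[of "j-1" n \<sigma>] unfolding F_def by metis
    qed
    moreover have "\<pi> j = \<sigma> j" if "j \<notin> {1..n}" for j
      using a(1,2) that unfolding P_def by (metis (mono_tags) mem_Collect_eq permutes_not_in)
    ultimately have "\<forall>j. \<pi> j = \<sigma> j" by blast
    thus "\<pi> = \<sigma>" by (simp add: fun_eq_iff)
  qed
  have img: "F ` P = LA {1..n} I"
  proof
    show "F ` P \<subseteq> LA {1..n} I"
    proof
      fix xs assume "xs \<in> F ` P"
      then obtain \<pi> where p: "\<pi> permutes {1..n}" "descent_set n \<pi> = I" "xs = F \<pi>"
        unfolding P_def by auto
      have "inj_on \<pi> {1..n}" using p(1) permutes_inj_on by blast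
      hence "distinct xs" unfolding p(3) F_def
        by (simp add: distinct_map atLeastLessThanSuc_atLeastAtMost del: upt_Suc)
      moreover have "set xs = {1..n}" unfolding p(3) F_def using p(1)
        by (simp add: atLeastLessThanSuc_atLeastAtMost permutes_image del: upt_Suc)
      ultimately show "xs \<in> LA {1..n} I" unfolding LA_def F_def
        using p ldesc_perm[of \<pi> n] by (simp only: F_def mem_Collect_eq)
    qed
  next
    show "LA {1..n} I \<subseteq> F ` P"
    proof
      fix xs assume xs: "xs \<in> LA {1..n} I"
      hence d: "distinct xs" "set xs = {1..n}" "ldesc xs = I" unfolding LA_def by auto
      have "length xs = card (set xs)" using d(1) by (simp add: distinct_card)
      hence lx: "length xs = n" using d(2) by simp
      define \<pi> where "\<pi> = (\<lambda>j. if j \<in> {1..n} then xs!(j-1) else j)"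
      have Fp: "F \<pi> = xs" unfolding F_def
      proof (rule nth_equalityI)
        show "length (map \<pi> [1..<Suc n]) = length xs" using lx by (simp del: upt_Suc)
        fix i assume "i < length (map \<pi> [1..<Suc n])"
        hence i: "i < n" by (simp del: upt_Suc)
        hence "Suc i \<in> {1..n}" by simp
        thus "map \<pi> [1..<Suc n] ! i = xs ! i" using nth_perm[OF i, of \<pi>] unfolding \<pi>_def by simp
      qed
      have im: "\<pi> ` {1..n} = {1..n}"
      proof -
        have "set (F \<pi>) = \<pi> ` {1..n}" unfolding F_def
          by (simp add: atLeastLessThanSuc_atLeastAtMost del: upt_Suc)
        thus ?thesis using Fp d by simp
      qed
      hence "inj_on \<pi> {1..n}" by (simp add: eq_card_imp_inj_on)
      hence "bij_betw \<pi> {1..n} {1..n}" using im by (simp add: bij_betw_def)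
      hence "\<pi> permutes {1..n}" by (rule bij_imp_permutes) (auto simp: \<pi>_def)
      moreover have "descent_set n \<pi> = I" using ldesc_perm[of \<pi> n] Fp d unfolding F_def by simp
      ultimately have "\<pi> \<in> P" unfolding P_def by blast
      thus "xs \<in> F ` P" using Fp by (metis image_eqI)
    qed
  qed
  have "card P = card (LA {1..n} I)" using card_image[OF inj] img by simp
  thus ?thesis unfolding descent_count_def P_def .
qed




definition dl where "dl J n = card (LA {1..n} J)"

lemma dl_empty: "dl {} n = 1"
proof -
  have "LA {1..n} {} = {sorted_list_of_set {1..n}}"
  proof
    show "LA {1..n} {} \<subseteq> {sorted_list_of_set {1..n}}"
      unfolding LA_def using nodesc_sorted sorted_set_eq by fastforce
    show "{sorted_list_of_set {1..n}} \<subseteq> LA {1..n} {}"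
      unfolding LA_def by (auto intro!: sorted_nodesc simp: strict_sorted_list_of_set)
  qed
  thus ?thesis unfolding dl_def by simp
qed

lemma dl_rec:
  assumes "finite I" "\<forall>k\<in>I. k > 0" "I \<noteq> {}" "m = Max I" "J = I - {m}" "m \<le> n"
  shows "dl I n + dl J n = (n choose m) * dl J m"
proof -
  have mI: "m \<in> I" using assms by simp
  have J: "J \<subseteq> {1..<m}" using assms Max_ge by fastforce
  have IJ: "I = insert m J" "m \<notin> J" using assms(4,5) mI by auto
  have key: "\<And>X. (X - {m} = J) = (X = I \<or> X = J)"
  proof -
    fix X show "(X - {m} = J) = (X = I \<or> X = J)"
      using IJ by (cases "m \<in> X") auto
  qed
  have "{xs. distinct xs \<and> set xs = {1..n} \<and> ldesc xs - {m} = J} = LA {1..n} I \<union> LA {1..n} J"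
    unfolding LA_def key by blast
  moreover have "LA {1..n} I \<inter> LA {1..n} J = {}" unfolding LA_def using IJ by blast
  ultimately show ?thesis using decomp[OF assms(6) J] card_Un_disjoint[OF finite_LA finite_LA]
    unfolding dl_def by (metis finite_atLeastAtMost)
qed

definition bpoly :: "nat \<Rightarrow> complex poly" where
  "bpoly m = smult (1 / fact m) (\<Prod>k<m. [:- of_nat k, 1:])"

lemma poly_bpoly: "poly (bpoly m) (of_nat n) = of_nat (n choose m)"
  unfolding bpoly_def binomial_gbinomial gbinomial_prod_rev
  by (simp add: poly_prod atLeast0LessThan field_simps)




lemma main:
  "finite I \<Longrightarrow> \<forall>k\<in>I. k > 0 \<Longrightarrow> \<exists>p::complex poly.
     (\<forall>n. n > Max (I \<union> {0}) \<longrightarrow> poly p (of_nat n) = of_nat (dl I n)) \<and>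
     (\<forall>i\<in>I. poly p (of_nat i) = 0)"
proof (induction "card I" arbitrary: I rule: less_induct)
  case less
  show ?case
  proof (cases "I = {}")
    case True
    thus ?thesis by (intro exI[of _ 1]) (simp add: dl_empty)
  next
    case False
    define m where "m = Max I"
    define J where "J = I - {m}"
    have mI: "m \<in> I" using False less m_def by simp
    have m0: "m > 0" using mI less by auto
    have Jm: "\<forall>j\<in>J. j < m" using less J_def m_def
      by (metis Diff_iff Max_ge le_neq_implies_less singletonI)
    have MI: "Max (I \<union> {0}) = m" using less False m_def
      by (metis Max_insert insert_is_Un max_0L sup_commute)
    have MJ: "Max (J \<union> {0}) < m" using Jm m0 less J_def
      by (simp add: Max_less_iff)
    have "card J < card I" using mI less(2) J_def by (metis card_Diff1_less)
    moreover have "finite J" "\<forall>k\<in>J. k > 0" using less(2,3) J_def by auto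
    ultimately have "\<exists>q::complex poly. (\<forall>n. n > Max (J \<union> {0}) \<longrightarrow> poly q (of_nat n) = of_nat (dl J n)) \<and>
      (\<forall>i\<in>J. poly q (of_nat i) = 0)" using less(1) by blast
    then obtain q :: "complex poly" where q: "\<forall>n. n > Max (J \<union> {0}) \<longrightarrow> poly q (of_nat n) = of_nat (dl J n)"
      "\<forall>i\<in>J. poly q (of_nat i) = 0" by blast
    define p where "p = smult (of_nat (dl J m)) (bpoly m) - q"
    have "\<forall>n. n > Max (I \<union> {0}) \<longrightarrow> poly p (of_nat n) = of_nat (dl I n)"
    proof (intro allI impI)
      fix n assume "n > Max (I \<union> {0})"
      hence n: "n > m" using MI by simp
      have r: "dl I n + dl J n = (n choose m) * dl J m"
        using dl_rec[OF less(2,3) False m_def J_def] n by simp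
      have "poly p (of_nat n) = of_nat (dl J m) * of_nat (n choose m) - of_nat (dl J n)"
        unfolding p_def using q(1) n MJ by (simp add: poly_bpoly)
      also have "\<dots> = (of_nat (dl I n + dl J n) :: complex) - of_nat (dl J n)"
        by (simp only: r) simp
      finally show "poly p (of_nat n) = of_nat (dl I n)" by simp
    qed
    moreover have "\<forall>i\<in>I. poly p (of_nat i) = 0"
    proof
      fix i assume i: "i \<in> I"
      show "poly p (of_nat i) = 0"
      proof (cases "i = m")
        case True
        thus ?thesis unfolding p_def using q(1) MJ by (simp add: poly_bpoly)
      next
        case False
        hence "i \<in> J" "i < m" using i J_def Jm by auto
        thus ?thesis unfolding p_def using q(2) by (simp add: poly_bpoly)
      qed
    qed
    ultimately show ?thesis by blast
  qed
qed




lemma poly_unique: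
  fixes p q :: "complex poly"
  assumes "\<forall>n. n > M \<longrightarrow> poly p (of_nat n) = c n" "\<forall>n. n > M \<longrightarrow> poly q (of_nat n) = c n"
  shows "p = q"
proof (rule ccontr)
  assume "p \<noteq> q"
  hence "finite {x. poly (p - q) x = 0}" by (intro poly_roots_finite) simp
  moreover have "of_nat ` {M<..} \<subseteq> {x. poly (p - q) x = 0}" using assms by auto
  ultimately have "finite (of_nat ` {M<..} :: complex set)" by (rule finite_subset[rotated])
  hence "finite {M<..}" using finite_imageD inj_of_nat by (metis inj_on_subset subset_UNIV)
  thus False using infinite_Ioi by blast
qed

theorem theorem4p1:
  fixes I :: "nat set" and i :: nat
  assumes "finite I" and "\<forall>k\<in>I. k > 0" and "i \<in> I"
  shows "poly (descent_poly I) (of_nat i) = 0"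
proof -
  obtain p :: "complex poly" where p: "\<forall>n. n > Max (I \<union> {0}) \<longrightarrow> poly p (of_nat n) = of_nat (dl I n)"
    "\<forall>i\<in>I. poly p (of_nat i) = 0" using main[OF assms(1,2)] by blast
  have "descent_poly I = p" unfolding descent_poly_def
  proof (rule the_equality)
    show "\<forall>n. n > Max (I \<union> {0}) \<longrightarrow> poly p (of_nat n) = of_nat (descent_count I n)"
      using p(1) by (simp add: dc_eq dl_def)
    fix r :: "complex poly" assume "\<forall>n. n > Max (I \<union> {0}) \<longrightarrow> poly r (of_nat n) = of_nat (descent_count I n)"
    thus "r = p" using p(1) poly_unique[of "Max (I \<union> {0})" r "\<lambda>n. of_nat (dl I n)" p]
      by (simp add: dc_eq dl_def)
  qed
  thus ?thesis using p(2) assms(3) by simp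
qed



end
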